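(* Let $\Delta$ be a compact Hausdorff space, $u\colon\Delta\to\mathbb R$ continuous, $v\colon\Delta\to\mathbb R$ upper semicontinuous, $f(\alpha)=\max\{v(\bm w):u(\bm w)=\alpha\}$ (with $\max\varnothing=-\infty$) and $\tau(q)=\min_{\bm w\in\Delta}\{q\,u(\bm w)-v(\bm w)\}$. Then the limits $\partial^-\tau(\infty)=\lim_{q\to\infty}\tau(q)/q$ and $\partial^+\tau(-\infty)=\lim_{q\to-\infty}\tau(q)/q$ exist and are finite, and $\tau$ is supported at $(\infty,\partial^-\tau(\infty))$ and at $(-\infty,\partial^+\tau(-\infty))$. In particular $\tau^*(\partial^-\tau(\infty))=f(\partial^-\tau(\infty))$ and $\tau^*(\partial^+\tau(-\infty))=f(\partial^+\tau(-\infty))$.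
   Context: Concave conjugate: $\tau^*(\alpha)=\inf_{q\in\mathbb R}(q\alpha-\tau(q))$. $\tau$ is supported at $(\infty,a)$ (with $a=\partial^-\tau(\infty)$) if there is $\bm w\in\Delta$ such that the line $q\mapsto q\,u(\bm w)-v(\bm w)$ is the affine asymptote of $\tau$ as $q\to\infty$, i.e. $\tau(q)-(q\,u(\bm w)-v(\bm w))\to0$ as $q\to\infty$; similarly for $(-\infty,\partial^+\tau(-\infty))$ as $q\to-\infty$. *)

theory Defs
  imports "HOL-Analysis.Analysis"
begin

definition usc_map :: "'a topology \<Rightarrow> ('a \<Rightarrow> real) \<Rightarrow> bool" where
  "usc_map X v \<longleftrightarrow> (\<forall>a. openin X {x \<in> topspace X. v x < a})"

text \<open>f(alpha) = max of v over the level set u = alpha, with max of the empty set = -infinity.\<close>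
definition fspec :: "'a topology \<Rightarrow> ('a \<Rightarrow> real) \<Rightarrow> ('a \<Rightarrow> real) \<Rightarrow> real \<Rightarrow> ereal" where
  "fspec X u v \<alpha> = Sup ((\<lambda>w. ereal (v w)) ` {w \<in> topspace X. u w = \<alpha>})"

definition tau :: "'a topology \<Rightarrow> ('a \<Rightarrow> real) \<Rightarrow> ('a \<Rightarrow> real) \<Rightarrow> real \<Rightarrow> real" where
  "tau X u v q = Inf ((\<lambda>w. q * u w - v w) ` topspace X)"

definition conj_concave :: "(real \<Rightarrow> real) \<Rightarrow> real \<Rightarrow> ereal" where
  "conj_concave t \<alpha> = Inf (range (\<lambda>q. ereal (q * \<alpha> - t q)))"

text \<open>tau is supported at (infinity, .) / (-infinity, .): some point w gives the affine asymptote.\<close>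
definition supported_at_top :: "'a topology \<Rightarrow> ('a \<Rightarrow> real) \<Rightarrow> ('a \<Rightarrow> real) \<Rightarrow> (real \<Rightarrow> real) \<Rightarrow> bool" where
  "supported_at_top X u v t \<longleftrightarrow>
     (\<exists>w \<in> topspace X. ((\<lambda>q. t q - (q * u w - v w)) \<longlongrightarrow> 0) at_top)"

definition supported_at_bot :: "'a topology \<Rightarrow> ('a \<Rightarrow> real) \<Rightarrow> ('a \<Rightarrow> real) \<Rightarrow> (real \<Rightarrow> real) \<Rightarrow> bool" where
  "supported_at_bot X u v t \<longleftrightarrow>
     (\<exists>w \<in> topspace X. ((\<lambda>q. t q - (q * u w - v w)) \<longlongrightarrow> 0) at_bot)"

end

theory Submission
  imports Defs
begin

lemma usc_max:
  assumes "usc_map X v" "compactin X K" "K \<noteq> {}"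
  shows "\<exists>x\<in>K. \<forall>y\<in>K. v y \<le> v x"
proof (rule ccontr)
  assume "\<not> ?thesis"
  hence h: "\<forall>x\<in>K. \<exists>y\<in>K. v x < v y" by (auto simp: not_le)
  define U where "U = (\<lambda>y. {x \<in> topspace X. v x < v y}) ` K"
  have "\<And>S. S \<in> U \<Longrightarrow> openin X S" using assms(1) by (auto simp: usc_map_def U_def)
  moreover have "K \<subseteq> \<Union>U" using h compactin_subset_topspace[OF assms(2)] unfolding U_def by blast
  ultimately obtain F where F: "finite F" "F \<subseteq> U" "K \<subseteq> \<Union>F" using compactinD assms(2) by metis
  obtain G where G: "G \<subseteq> K" "finite G" "F = (\<lambda>y. {x \<in> topspace X. v x < v y}) ` G"
    using finite_subset_image[OF F(1) F(2)[unfolded U_def]] by blast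
  have cov: "\<forall>x\<in>K. \<exists>y\<in>G. v x < v y" using F(3) unfolding G(3) by blast
  have "G \<noteq> {}" using cov assms(3) by blast
  hence mi: "Max (v ` G) \<in> v ` G" using G(2) by (intro Max_in) auto
  then obtain g where g1: "g \<in> G" "v g = Max (v ` G)" by (metis imageE)
  have g: "g \<in> G" "\<forall>y\<in>G. v y \<le> v g" using g1 G(2) by (auto intro: Max_ge)
  have "g \<in> K" using g G(1) by blast
  then obtain y where "y \<in> G" "v g < v y" using cov by blast
  thus False using g by fastforce
qed

lemma key:
  assumes cs: "compact_space X" and ne: "topspace X \<noteq> {}"
    and cu: "continuous_map X euclideanreal u" and uv: "usc_map X v"
  shows "\<exists>w0\<in>topspace X. (\<forall>w\<in>topspace X. u w = u w0 \<longrightarrow> v w \<le> v w0)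
     \<and> ((\<lambda>q. tau X u v q - (q * u w0 - v w0)) \<longlongrightarrow> 0) at_top
     \<and> (\<forall>q. tau X u v q \<le> q * u w0 - v w0)"
proof -
  let ?T = "topspace X"
  have cT: "compactin X ?T" using cs by (simp add: compact_space_def)
  have cuT: "compact (u ` ?T)" using image_compactin[OF cT cu] by simp
  obtain a where a: "a \<in> u ` ?T" "\<forall>y\<in>u ` ?T. a \<le> y"
    using compact_attains_inf[OF cuT] ne by auto
  obtain B where B: "\<forall>w\<in>?T. \<bar>u w\<bar> \<le> B"
    using compact_imp_bounded[OF cuT] by (auto simp: bounded_iff)
  obtain wm where wm: "wm \<in> ?T" "\<forall>w\<in>?T. v w \<le> v wm" using usc_max[OF uv cT ne] by blast
  define M where "M = v wm"
  have M: "\<forall>w\<in>?T. v w \<le> M" using wm M_def by auto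
  define A where "A = {w \<in> ?T. u w \<in> {a}}"
  have "closedin X A" unfolding A_def by (rule closedin_continuous_map_preimage[OF cu]) simp
  hence cA: "compactin X A" using cs closedin_compact_space by blast
  have "A \<noteq> {}" using a A_def by auto
  then obtain w0 where w0: "w0 \<in> A" "\<forall>y\<in>A. v y \<le> v w0" using usc_max[OF uv cA] by blast
  have w0T: "w0 \<in> ?T" and uw0: "u w0 = a" using w0 A_def by auto
  have lev: "\<forall>w\<in>?T. u w = u w0 \<longrightarrow> v w \<le> v w0" using w0 A_def uw0 by auto
  have bdd: "bdd_below ((\<lambda>w. q * u w - v w) ` ?T)" for q
  proof -
    have "\<forall>w\<in>?T. - \<bar>q\<bar> * B - M \<le> q * u w - v w"
    proof
      fix w assume w: "w \<in> ?T"
      have "\<bar>q * u w\<bar> \<le> \<bar>q\<bar> * B" using B w by (simp add: abs_mult mult_left_mono)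
      thus "- \<bar>q\<bar> * B - M \<le> q * u w - v w" using M w abs_ge_minus_self[of "q * u w"] by fastforce
    qed
    thus ?thesis by (auto simp: bdd_below_def)
  qed
  have le: "tau X u v q \<le> q * u w - v w" if "w \<in> ?T" for q w
    unfolding tau_def using bdd that by (auto intro: cInf_lower)
  have up: "\<forall>q. tau X u v q \<le> q * u w0 - v w0" using le w0T by auto
  have lo: "\<exists>Q. \<forall>q\<ge>Q. \<forall>w\<in>?T. q * a - v w0 - e \<le> q * u w - v w" if e: "e > 0" for e
  proof -
    define K where "K = {w \<in> ?T. v w0 + e \<le> v w}"
    have "openin X {w \<in> ?T. v w < v w0 + e}" using uv by (simp add: usc_map_def)
    moreover have "?T - {w \<in> ?T. v w < v w0 + e} = K" unfolding K_def by auto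
    ultimately have "closedin X K" by (metis closedin_def openin_subset Diff_subset K_def Collect_subset
          Diff_Diff_Int inf.absorb2)
    hence cK: "compactin X K" using cs closedin_compact_space by blast
    have outK: "q * a - v w0 - e \<le> q * u w - v w" if "q \<ge> 0" "w \<in> ?T" "w \<notin> K" for q w
    proof -
      have "a \<le> u w" using a that by auto
      hence "q * a \<le> q * u w" using that by (simp add: mult_left_mono)
      moreover have "v w < v w0 + e" using that K_def by auto
      ultimately show ?thesis by linarith
    qed
    show ?thesis
    proof (cases "K = {}")
      case True
      thus ?thesis using outK by blast
    next
      case False
      have cuK: "compact (u ` K)" using image_compactin[OF cK cu] by simp
      obtain k where k: "k \<in> K" "\<forall>w\<in>K. u k \<le> u w"
        using compact_attains_inf[OF cuK] False by auto
      have kT: "k \<in> ?T" using k K_def by auto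
      have "u k \<noteq> a"
      proof
        assume "u k = a"
        hence "v k \<le> v w0" using lev kT uw0 by auto
        thus False using k K_def e by auto
      qed
      hence "u k > a" using a kT by force
      define d where "d = u k - a"
      have d: "d > 0" using \<open>u k > a\<close> d_def by simp
      define Q where "Q = max 0 ((M - v w0) / d)"
      have "\<forall>q\<ge>Q. \<forall>w\<in>?T. q * a - v w0 - e \<le> q * u w - v w"
      proof (intro allI impI ballI)
        fix q w assume q: "q \<ge> Q" and w: "w \<in> ?T"
        show "q * a - v w0 - e \<le> q * u w - v w"
        proof (cases "w \<in> K")
          case False thus ?thesis using outK q w Q_def by auto
        next
          case True
          have q0: "q \<ge> 0" using q Q_def by auto
          have "q \<ge> (M - v w0) / d" using q Q_def by auto
          hence "q * d \<ge> M - v w0" using d by (simp add: pos_divide_le_eq)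
          moreover have "u w \<ge> a + d" using k True d_def by auto
          hence "q * u w \<ge> q * (a + d)" using q0 by (simp add: mult_left_mono)
          moreover have "v w \<le> M" using M w by auto
          ultimately show ?thesis using e by (simp add: algebra_simps)
        qed
      qed
      thus ?thesis by blast
    qed
  qed
  have lim: "((\<lambda>q. tau X u v q - (q * u w0 - v w0)) \<longlongrightarrow> 0) at_top"
    unfolding tendsto_iff
  proof (intro allI impI)
    fix e :: real assume e: "e > 0"
    obtain Q where Q: "\<forall>q\<ge>Q. \<forall>w\<in>?T. q * a - v w0 - e/2 \<le> q * u w - v w"
      using lo[of "e/2"] e by auto
    have h1: "tau X u v q \<ge> q * a - v w0 - e/2" if "q \<ge> Q" for q
      unfolding tau_def using Q that ne by (auto intro!: cInf_greatest)
    have "\<forall>q\<ge>Q. dist (tau X u v q - (q * u w0 - v w0)) 0 < e"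
    proof (intro allI impI)
      fix q assume q: "Q \<le> q"
      have a1: "q * a - v w0 - e/2 \<le> tau X u v q" using h1 q by blast
      have a2: "tau X u v q \<le> q * a - v w0" using up uw0 by metis
      show "dist (tau X u v q - (q * u w0 - v w0)) 0 < e"
        unfolding dist_real_def uw0 using a1 a2 e by (simp add: abs_le_iff abs_less_iff)
    qed
    thus "\<forall>\<^sub>F q in at_top. dist (tau X u v q - (q * u w0 - v w0)) 0 < e"
      by (auto simp: eventually_at_top_linorder)
  qed
  show ?thesis using w0T lev lim up by blast
qed


lemma asym:
  fixes t :: "real \<Rightarrow> real"
  assumes l: "((\<lambda>q. t q - (q * c - d)) \<longlongrightarrow> 0) F"
    and inf: "filterlim (\<lambda>q::real. q) at_infinity F" and nz: "eventually (\<lambda>q. q \<noteq> 0) F"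
  shows "((\<lambda>q. t q / q) \<longlongrightarrow> c) F"
proof -
  have 1: "((\<lambda>q. (t q - (q * c - d)) / q) \<longlongrightarrow> 0) F" by (rule tendsto_divide_0[OF l inf])
  have 2: "((\<lambda>q. d / q) \<longlongrightarrow> 0) F" by (rule tendsto_divide_0[OF tendsto_const inf])
  have 3: "((\<lambda>q. c + (t q - (q * c - d)) / q - d / q) \<longlongrightarrow> c + 0 - 0) F"
    by (intro tendsto_intros 1 2)
  have "eventually (\<lambda>q. c + (t q - (q * c - d)) / q - d / q = t q / q) F"
    using nz by eventually_elim (simp add: field_simps)
  thus ?thesis using 3 by (simp add: tendsto_cong)
qed

lemma conjlem:
  fixes t :: "real \<Rightarrow> real"
  assumes up: "\<forall>q. t q \<le> q * c - d" and l: "((\<lambda>q. t q - (q * c - d)) \<longlongrightarrow> 0) F"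
    and F: "F \<noteq> bot"
  shows "conj_concave t c = ereal d"
proof (rule antisym)
  have "((\<lambda>q. d - (t q - (q * c - d))) \<longlongrightarrow> d - 0) F" by (intro tendsto_intros l)
  hence "((\<lambda>q. q * c - t q) \<longlongrightarrow> d) F" by (simp add: algebra_simps)
  hence L: "((\<lambda>q. ereal (q * c - t q)) \<longlongrightarrow> ereal d) F" by (rule tendsto_ereal)
  have E: "eventually (\<lambda>q. conj_concave t c \<le> ereal (q * c - t q)) F"
    unfolding conj_concave_def by (intro always_eventually allI) (rule INF_lower, simp)
  show "conj_concave t c \<le> ereal d"
    by (rule tendsto_le[OF F L tendsto_const E])
next
  show "ereal d \<le> conj_concave t c"
    unfolding conj_concave_def
  proof (rule INF_greatest)
    fix q assume "q \<in> (UNIV :: real set)"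
    have "d \<le> q * c - t q" using up[rule_format, of q] by linarith
    thus "ereal d \<le> ereal (q * c - t q)" by simp
  qed
qed

lemma fspeclem:
  assumes "w0 \<in> topspace X" "u w0 = c" "\<forall>w\<in>topspace X. u w = c \<longrightarrow> v w \<le> v w0"
  shows "fspec X u v c = ereal (v w0)"
  unfolding fspec_def
proof (rule antisym)
  show "(SUP w\<in>{w \<in> topspace X. u w = c}. ereal (v w)) \<le> ereal (v w0)"
    using assms by (auto intro!: SUP_least)
  show "ereal (v w0) \<le> (SUP w\<in>{w \<in> topspace X. u w = c}. ereal (v w))"
    using assms by (auto intro!: SUP_upper)
qed

lemma tau_neg: "tau X (\<lambda>w. - u w) v q = tau X u v (- q)"
  unfolding tau_def by simp

theorem mainTheorem10:
  fixes X :: "'a topology" and u v :: "'a \<Rightarrow> real"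
  assumes "compact_space X" and "Hausdorff_space X" and "topspace X \<noteq> {}"
    and "continuous_map X euclideanreal u"
    and "usc_map X v"
  shows "\<exists>a b :: real.
           ((\<lambda>q. tau X u v q / q) \<longlongrightarrow> a) at_top
         \<and> ((\<lambda>q. tau X u v q / q) \<longlongrightarrow> b) at_bot
         \<and> supported_at_top X u v (tau X u v)
         \<and> supported_at_bot X u v (tau X u v)
         \<and> conj_concave (tau X u v) a = fspec X u v a
         \<and> conj_concave (tau X u v) b = fspec X u v b"
proof -
  obtain w0 where w0: "w0 \<in> topspace X" "\<forall>w\<in>topspace X. u w = u w0 \<longrightarrow> v w \<le> v w0"
    "((\<lambda>q. tau X u v q - (q * u w0 - v w0)) \<longlongrightarrow> 0) at_top"
    "\<forall>q. tau X u v q \<le> q * u w0 - v w0"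
    using key[OF assms(1,3,4,5)] by blast
  have cm: "continuous_map X euclideanreal (\<lambda>w. - u w)" using assms(4) by simp
  obtain w1 where w1: "w1 \<in> topspace X" "\<forall>w\<in>topspace X. - u w = - u w1 \<longrightarrow> v w \<le> v w1"
    "((\<lambda>q. tau X (\<lambda>w. - u w) v q - (q * (- u w1) - v w1)) \<longlongrightarrow> 0) at_top"
    "\<forall>q. tau X (\<lambda>w. - u w) v q \<le> q * (- u w1) - v w1"
    using key[OF assms(1,3) cm assms(5)] by blast
  have l1: "((\<lambda>q. tau X u v (- q) - (q * (- u w1) - v w1)) \<longlongrightarrow> 0) at_top"
    using w1(3) by (simp add: tau_neg)
  note l1' = filterlim_compose[OF l1 filterlim_uminus_at_top_at_bot]
  from l1' have l2: "((\<lambda>p. tau X u v p - (p * u w1 - v w1)) \<longlongrightarrow> 0) at_bot" by simp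
  have up2: "\<forall>p. tau X u v p \<le> p * u w1 - v w1"
  proof
    fix p show "tau X u v p \<le> p * u w1 - v w1"
      using w1(4)[rule_format, of "- p"] by (simp add: tau_neg)
  qed
  have lev1: "\<forall>w\<in>topspace X. u w = u w1 \<longrightarrow> v w \<le> v w1" using w1(2) by auto
  have inft: "filterlim (\<lambda>q::real. q) at_infinity at_top"
    by (rule filterlim_at_top_imp_at_infinity[OF filterlim_ident])
  have infb: "filterlim (\<lambda>q::real. q) at_infinity at_bot"
    using at_bot_le_at_infinity filterlim_ident filterlim_mono by blast
  have nzt: "eventually (\<lambda>q::real. q \<noteq> 0) at_top"
    using eventually_gt_at_top[of 0] by eventually_elim simp
  have nzb: "eventually (\<lambda>q::real. q \<noteq> 0) at_bot"
    unfolding eventually_at_bot_linorder by (rule exI[of _ "-1"]) auto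
  show ?thesis
  proof (intro exI conjI)
    show "((\<lambda>q. tau X u v q / q) \<longlongrightarrow> u w0) at_top" by (rule asym[OF w0(3) inft nzt])
    show "((\<lambda>q. tau X u v q / q) \<longlongrightarrow> u w1) at_bot" by (rule asym[OF l2 infb nzb])
    show "supported_at_top X u v (tau X u v)" unfolding supported_at_top_def using w0(1,3) by blast
    show "supported_at_bot X u v (tau X u v)" unfolding supported_at_bot_def using w1(1) l2 by blast
    show "conj_concave (tau X u v) (u w0) = fspec X u v (u w0)"
      using conjlem[OF w0(4) w0(3) trivial_limit_at_top_linorder] fspeclem[OF w0(1) refl w0(2)] by simp
    show "conj_concave (tau X u v) (u w1) = fspec X u v (u w1)"
      using conjlem[OF up2 l2 trivial_limit_at_bot_linorder] fspeclem[OF w1(1) refl lev1] by simp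
  qed
qed

end
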